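(* Let $\Omega$ be a triangulation of a planar domain whose vertex set $V$ is in general position. Label the edges of $\Omega$ as terminal-edges, internal-edges and frontier-edges (with boundary edges counted as frontier-edges). Then every vertex $v \in V$ is an endpoint of at least one frontier-edge or barrier-edge. Equivalently, there is no vertex of $\Omega$ all of whose incident edges are internal-edges, i.e. there are no isolated interior points of terminal-edge regions.
   Context: Let $\Omega$ be a triangulation of a planar domain. Here "general position" is taken to mean that the three edges of every triangle of $\Omega$ have pairwise distinct lengths, so every triangle has a unique longest edge. For an edge $e$ of $\Omega$, the labels are as follows. - If $e$ is shared by two triangles $t_1,t_2$: - $e$ is a terminal-edge if it is the longest edge of both $t_1$ and $t_2$; - $e$ is a frontier-edge if it is the longest edge of neither $t_1$ nor $t_2$; - $e$ is an internal-edge if it is the longest edge of exactly one of $t_1,t_2$. - If $e$ belongs to only one triangle, it is a boundary edge and is treated as a frontier-edge. The Longest-edge propagation path $\mathrm{Lepp}(t_0)$ of a triangle $t_0$ is the sequence $t_0,t_1,\dots,t_l$ in which $t_i$ is the neighbor of $t_{i-1}$ across the longest edge of $t_{i-1}$. The sequence stops when that longest edge is a terminal-edge (or a boundary edge); this edge is the terminal-edge of $\mathrm{Lepp}(t_0)$. A terminal-edge region is the union of all triangles whose Lepp has the same terminal-edge. Terminal-edge regions cover the domain without overlapping. A barrier-edge is a frontier-edge lying in the interior of a terminal-edge region, i.e. both triangles sharing it belong to the same terminal-edge region. *)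

theory Defs
  imports "HOL-Analysis.Analysis"
begin

text \<open>Points of the plane are complex numbers. A triangle is the set of its three
vertices; an edge is the set of its two endpoints.\<close>

definition triangulation :: "complex set set \<Rightarrow> bool" where
  "triangulation T \<longleftrightarrow>
     finite T \<and>
     (\<forall>t\<in>T. card t = 3 \<and> \<not> collinear t) \<and>
     (\<forall>t1\<in>T. \<forall>t2\<in>T. convex hull t1 \<inter> convex hull t2 = convex hull (t1 \<inter> t2)) \<and>
     (\<forall>e. card e = 2 \<longrightarrow> card {t\<in>T. e \<subseteq> t} \<le> 2)"

definition edge_length :: "complex set \<Rightarrow> real" where
  "edge_length e = (SOME d. \<exists>a b. e = {a, b} \<and> d = dist a b)"

definition tri_edge :: "complex set \<Rightarrow> complex set \<Rightarrow> bool" where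
  "tri_edge t e \<longleftrightarrow> e \<subseteq> t \<and> card e = 2"

definition general_position :: "complex set set \<Rightarrow> bool" where
  "general_position T \<longleftrightarrow>
     (\<forall>t\<in>T. \<forall>e1 e2. tri_edge t e1 \<and> tri_edge t e2 \<and> e1 \<noteq> e2
        \<longrightarrow> edge_length e1 \<noteq> edge_length e2)"

definition is_longest :: "complex set \<Rightarrow> complex set \<Rightarrow> bool" where
  "is_longest t e \<longleftrightarrow> tri_edge t e \<and>
     (\<forall>e'. tri_edge t e' \<and> e' \<noteq> e \<longrightarrow> edge_length e' < edge_length e)"

definition is_edge :: "complex set set \<Rightarrow> complex set \<Rightarrow> bool" where
  "is_edge T e \<longleftrightarrow> (\<exists>t\<in>T. tri_edge t e)"

definition tris :: "complex set set \<Rightarrow> complex set \<Rightarrow> complex set set" where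
  "tris T e = {t\<in>T. e \<subseteq> t}"

definition boundary_edge :: "complex set set \<Rightarrow> complex set \<Rightarrow> bool" where
  "boundary_edge T e \<longleftrightarrow> is_edge T e \<and> card (tris T e) = 1"

definition terminal_edge :: "complex set set \<Rightarrow> complex set \<Rightarrow> bool" where
  "terminal_edge T e \<longleftrightarrow> is_edge T e \<and> card (tris T e) = 2 \<and>
     (\<forall>t\<in>tris T e. is_longest t e)"

definition internal_edge :: "complex set set \<Rightarrow> complex set \<Rightarrow> bool" where
  "internal_edge T e \<longleftrightarrow> is_edge T e \<and> card (tris T e) = 2 \<and>
     card {t\<in>tris T e. is_longest t e} = 1"

definition frontier_edge :: "complex set set \<Rightarrow> complex set \<Rightarrow> bool" where
  "frontier_edge T e \<longleftrightarrow> is_edge T e \<and>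
     (card (tris T e) = 1 \<or> (card (tris T e) = 2 \<and> (\<forall>t\<in>tris T e. \<not> is_longest t e)))"

definition lepp :: "complex set set \<Rightarrow> complex set list \<Rightarrow> bool" where
  "lepp T ts \<longleftrightarrow> ts \<noteq> [] \<and> set ts \<subseteq> T \<and>
     (\<forall>i. Suc i < length ts \<longrightarrow>
        (\<exists>e. is_longest (ts ! i) e \<and> internal_edge T e \<and>
             e \<subseteq> ts ! Suc i \<and> ts ! Suc i \<noteq> ts ! i)) \<and>
     (\<exists>e. is_longest (last ts) e \<and> (terminal_edge T e \<or> boundary_edge T e))"

definition lepp_terminal_edge :: "complex set set \<Rightarrow> complex set \<Rightarrow> complex set \<Rightarrow> bool" where
  "lepp_terminal_edge T t0 e \<longleftrightarrow>
     (\<exists>ts. lepp T ts \<and> hd ts = t0 \<and> is_longest (last ts) e)"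

definition terminal_edge_region :: "complex set set \<Rightarrow> complex set \<Rightarrow> complex set set" where
  "terminal_edge_region T e = {t\<in>T. lepp_terminal_edge T t e}"

definition barrier_edge :: "complex set set \<Rightarrow> complex set \<Rightarrow> bool" where
  "barrier_edge T e \<longleftrightarrow> frontier_edge T e \<and> card (tris T e) = 2 \<and>
     (\<exists>e'. tris T e \<subseteq> terminal_edge_region T e')"

end

theory Submission
  imports Defs
begin

lemma edge_length_pair: "edge_length {a, b} = dist a b"
proof -
  have ex: "\<exists>d a' b'. {a, b} = {a', b'} \<and> d = dist a' b'" by blast
  have "\<exists>a' b'. {a, b} = {a', b'} \<and> edge_length {a, b} = dist a' b'"
    unfolding edge_length_def by (rule someI_ex) (use ex in blast)
  then obtain a' b' where h: "{a, b} = {a', b'}" "edge_length {a, b} = dist a' b'" by blast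
  from h(1) have "(a = a' \<and> b = b') \<or> (a = b' \<and> b = a')" by (simp add: doubleton_eq_iff)
  then show ?thesis using h(2) by (auto simp: dist_commute)
qed

theorem theorem1:
  fixes T :: "complex set set" and v :: complex
  assumes "triangulation T"
    and "general_position T"
    and "v \<in> \<Union>T"
  shows "\<exists>e. v \<in> e \<and> (frontier_edge T e \<or> barrier_edge T e)"
proof -
  have finT: "finite T" and card3: "\<And>t. t \<in> T \<Longrightarrow> card t = 3"
    and le2: "\<And>e. card e = 2 \<Longrightarrow> card {t\<in>T. e \<subseteq> t} \<le> 2"
    using assms(1) unfolding triangulation_def by auto
  define W where "W = {w. \<exists>t\<in>T. v \<in> t \<and> w \<in> t \<and> w \<noteq> v}"
  have "W \<subseteq> \<Union>T" unfolding W_def by blast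
  moreover have "finite (\<Union>T)"
  proof -
    have "\<And>t. t \<in> T \<Longrightarrow> finite t" using card3 by (metis card.infinite zero_neq_numeral)
    then show ?thesis using finT by blast
  qed
  ultimately have finW: "finite W" by (rule finite_subset)
  obtain t0 where t0: "t0 \<in> T" "v \<in> t0" using assms(3) by blast
  have "card t0 = 3" using card3 t0 by blast
  have "t0 - {v} \<noteq> {}"
  proof
    assume "t0 - {v} = {}"
    then have "t0 \<subseteq> {v}" by blast
    then have "card t0 \<le> card {v}" by (intro card_mono) auto
    then show False using \<open>card t0 = 3\<close> by simp
  qed
  then have "W \<noteq> {}" unfolding W_def using t0 by blast
  have "Min (dist v ` W) \<in> dist v ` W" using finW \<open>W \<noteq> {}\<close> by (intro Min_in) auto
  then obtain w where wW: "w \<in> W" and wm: "dist v w = Min (dist v ` W)" by (metis (no_types, lifting) imageE)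
  have wmin: "dist v w \<le> dist v y" if "y \<in> W" for y
    unfolding wm using finW that by (intro Min_le) auto
  from wW obtain t1 where t1: "t1 \<in> T" "v \<in> t1" "w \<in> t1" "w \<noteq> v" unfolding W_def by blast
  define e where "e = {v, w}"
  have ce: "card e = 2" unfolding e_def using t1(4) by auto
  have edge: "is_edge T e" unfolding is_edge_def tri_edge_def e_def using t1 ce e_def by blast
  have fintris: "finite (tris T e)" unfolding tris_def using finT by simp
  have "t1 \<in> tris T e" unfolding tris_def e_def using t1 by auto
  then have c1: "card (tris T e) \<ge> 1" using fintris
    by (metis One_nat_def Suc_leI card_gt_0_iff empty_iff)
  have c2: "card (tris T e) \<le> 2" using le2[OF ce] unfolding tris_def .
  have nl: "\<not> is_longest t e" if "t \<in> tris T e" for t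
  proof
    assume L: "is_longest t e"
    have tT: "t \<in> T" and et: "e \<subseteq> t" using that unfolding tris_def by auto
    have "card t = 3" using card3 tT by blast
    have "\<not> t \<subseteq> {v, w}"
    proof
      assume "t \<subseteq> {v, w}"
      then have "card t \<le> card {v, w}" by (simp add: card_mono)
      then show False using \<open>card t = 3\<close> by (simp add: card_insert_if split: if_splits)
    qed
    then obtain x where x: "x \<in> t" "x \<noteq> v" "x \<noteq> w" by blast
    have vt: "v \<in> t" using et e_def by auto
    have xW: "x \<in> W" unfolding W_def using tT vt x by blast
    have te: "tri_edge t {v, x}" unfolding tri_edge_def using x vt by auto
    have "{v, x} \<noteq> e" unfolding e_def using x by (auto simp: doubleton_eq_iff)
    then have "edge_length {v, x} < edge_length e" using L te unfolding is_longest_def by blast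
    then have "dist v x < dist v w" by (simp add: edge_length_pair e_def)
    with wmin[OF xW] show False by simp
  qed
  have "frontier_edge T e"
    unfolding frontier_edge_def using edge c1 c2 nl by auto
  moreover have "v \<in> e" unfolding e_def by simp
  ultimately show ?thesis by blast
qed

end
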